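(* Let $0<c\le1<F$ and $s>0$. There exist constants $a_1,a_2,b>0$ depending only on $c$ such that at every time $t$ with $Z^t>0$, $$\mathbb E[Z^t-Z^{t+1}\mid x^t,\lambda^t]\ge \Pr[B\mid x^t,\lambda^t]\cdot a_1\big(1-c(1-Z^t/n)\big)-a_2e^{-b\lambda^t}.$$ This also holds with $Z^t-Z^{t+1}$ replaced by $\min\{1,Z^t-Z^{t+1}\}$.
   Context: Consider the SA-$(1,\lambda)$-EA on a dynamic monotone function: a function $f:\{0,1\}^n\to\mathbb R$ is monotone if $f(x)>f(y)$ whenever $x\ne y$ and $x_i\ge y_i$ for all $i$; $(f^t)_{t\ge0}$ is a sequence of monotone functions, $f^t$ possibly chosen adversarially depending on $x^t$. The algorithm (with constants $c>0$, $s>0$, $F>1$) maintains $x^t\in\{0,1\}^n$, real $\lambda^t\ge1$; in generation $t$ it creates $\lfloor\lambda^t\rceil$ (nearest integer) offspring $y^{t,j}$, each independently by flipping every bit of $x^t$ independently with probability $c/n$; $x^{t+1}$ is an offspring maximizing $f^t$ (ties uniformly at random); $\lambda^{t+1}=\max\{1,\lambda^t/F\}$ if $f^t(x^{t+1})>f^t(x^t)$, else $\lambda^{t+1}=F^{1/s}\lambda^t$. $Z^t$ is the number of zero-bits of $x^t$. $B$ is the event that some offspring of $x^t$ flips at least one zero-bit of $x^t$. *)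

theory Defs
  imports "HOL-Probability.Probability"
begin

text \<open>Bit strings of length n are bool lists of length n; False = zero-bit, True = one-bit.\<close>

fun iid_list :: "'a pmf \<Rightarrow> nat \<Rightarrow> 'a list pmf" where
  "iid_list p 0 = return_pmf []"
| "iid_list p (Suc k) = bind_pmf p (\<lambda>a. bind_pmf (iid_list p k) (\<lambda>as. return_pmf (a # as)))"

definition zeros :: "bool list \<Rightarrow> nat" where
  "zeros x = length (filter Not x)"

definition flip :: "bool list \<Rightarrow> bool list \<Rightarrow> bool list" where
  "flip x m = map2 (\<noteq>) x m"

definition monotone_pb :: "nat \<Rightarrow> (bool list \<Rightarrow> real) \<Rightarrow> bool" where
  "monotone_pb n f \<longleftrightarrow> (\<forall>x y. length x = n \<longrightarrow> length y = n \<longrightarrow> x \<noteq> y \<longrightarrow>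
      (\<forall>i<n. y ! i \<longrightarrow> x ! i) \<longrightarrow> f x > f y)"

definition select_best :: "(bool list \<Rightarrow> real) \<Rightarrow> bool list list \<Rightarrow> bool list pmf" where
  "select_best f ys = map_pmf (\<lambda>j. ys ! j)
     (pmf_of_set {j. j < length ys \<and> (\<forall>i<length ys. f (ys ! i) \<le> f (ys ! j))})"

text \<open>One generation of the SA-(1,lambda)-EA with mutation rate c/n, from parent x, offspring
  population size round(lambda), fitness f.\<close>
definition ea_step :: "real \<Rightarrow> nat \<Rightarrow> bool list \<Rightarrow> real \<Rightarrow> (bool list \<Rightarrow> real)
    \<Rightarrow> (bool list list \<times> bool list) pmf" where
  "ea_step c n x lam f =
     bind_pmf (iid_list (iid_list (bernoulli_pmf (c / real n)) n) (nat (round lam)))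
       (\<lambda>ms. map_pmf (\<lambda>x'. (ms, x')) (select_best f (map (flip x) ms)))"

definition event_B :: "nat \<Rightarrow> bool list \<Rightarrow> bool list list set" where
  "event_B n x = {ms. \<exists>m\<in>set ms. \<exists>i<n. \<not> x ! i \<and> m ! i}"

end

theory Submission
  imports Defs
begin


lemma expectation_bind_finite:
  fixes h :: "'b \<Rightarrow> real"
  assumes "finite (set_pmf p)" "\<And>x. x \<in> set_pmf p \<Longrightarrow> finite (set_pmf (f x))"
  shows "measure_pmf.expectation (bind_pmf p f) h
       = measure_pmf.expectation p (\<lambda>a. measure_pmf.expectation (f a) h)"
  using assms
  by (subst pmf_expectation_bind[of "set_pmf p"]) (auto simp: integral_measure_pmf[of "set_pmf p"])

lemma iid_set: "set_pmf (iid_list q k) \<subseteq> {l. length l = k \<and> set l \<subseteq> set_pmf q}"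
  by (induction k) fastforce+

lemma iid_finite: "finite (set_pmf q) \<Longrightarrow> finite (set_pmf (iid_list q k))"
proof -
  assume "finite (set_pmf q)"
  then have "finite {xs. set xs \<subseteq> set_pmf q \<and> length xs = k}" by (rule finite_lists_length_eq)
  then show ?thesis by (rule finite_subset[rotated]) (use iid_set in blast)
qed

lemma list_update_Cons0_fun: "list_update (x # xs) 0 = (\<lambda>a. a # xs)"
  by (rule ext) simp

lemma iid_resample:
  "i < k \<Longrightarrow> bind_pmf (iid_list q k) (\<lambda>l. map_pmf (\<lambda>a. l[i:=a]) q) = iid_list q k"
proof (induction k arbitrary: i)
  case 0 then show ?case by simp
next
  case (Suc k)
  show ?case
  proof (cases i)
    case 0
    have "bind_pmf (iid_list q (Suc k)) (\<lambda>l. map_pmf (\<lambda>a. l[i:=a]) q)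
       = bind_pmf q (\<lambda>a0. bind_pmf (iid_list q k) (\<lambda>as. map_pmf (\<lambda>a. a # as) q))"
    proof -
      have e: "\<And>a0 as. map_pmf (\<lambda>a. (a0 # as)[i:=a]) q = map_pmf (\<lambda>a. a # as) q"
        using 0 by simp
      show ?thesis using 0 by (simp add: bind_assoc_pmf bind_return_pmf list_update_Cons0_fun)
    qed
    also have "\<dots> = bind_pmf (iid_list q k) (\<lambda>as. map_pmf (\<lambda>a. a # as) q)"
      by (simp add: bind_pmf_const)
    also have "\<dots> = iid_list q (Suc k)"
      by (simp add: map_pmf_def bind_commute_pmf[of q])
    finally show ?thesis .
  next
    case (Suc i')
    with Suc.prems have i': "i' < k" by simp
    have "bind_pmf (iid_list q (Suc k)) (\<lambda>l. map_pmf (\<lambda>a. l[i:=a]) q)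
       = bind_pmf q (\<lambda>a0. bind_pmf (bind_pmf (iid_list q k) (\<lambda>as. map_pmf (\<lambda>a. as[i':=a]) q))
             (\<lambda>as. return_pmf (a0 # as)))"
      using Suc by (simp add: bind_assoc_pmf bind_return_pmf map_pmf_def)
    also have "\<dots> = iid_list q (Suc k)"
      using Suc.IH[OF i'] by simp
    finally show ?thesis .
  qed
qed

lemma pmf_int_cong:
  fixes f g :: "'a \<Rightarrow> real"
  shows "(\<And>x. x \<in> set_pmf M \<Longrightarrow> f x = g x) \<Longrightarrow> measure_pmf.expectation M f = measure_pmf.expectation M g"
  by (intro integral_cong_AE) (auto simp: AE_measure_pmf_iff)

lemma pmf_int_mono:
  fixes f g :: "'a \<Rightarrow> real"
  shows "finite (set_pmf M) \<Longrightarrow> (\<And>x. x \<in> set_pmf M \<Longrightarrow> f x \<le> g x) \<Longrightarrow>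
    measure_pmf.expectation M f \<le> measure_pmf.expectation M g"
  by (intro integral_mono_AE) (auto simp: AE_measure_pmf_iff integrable_measure_pmf_finite)

lemma iid_resample_int:
  fixes F :: "'a list \<Rightarrow> real"
  assumes "i < k" "finite (set_pmf q)"
  shows "measure_pmf.expectation (iid_list q k) F
       = measure_pmf.expectation (iid_list q k) (\<lambda>l. measure_pmf.expectation q (\<lambda>a. F (l[i:=a])))"
proof -
  have "measure_pmf.expectation (iid_list q k) F
      = measure_pmf.expectation (bind_pmf (iid_list q k) (\<lambda>l. map_pmf (\<lambda>a. l[i:=a]) q)) F"
    by (simp only: iid_resample[OF assms(1)])
  also have "\<dots> = measure_pmf.expectation (iid_list q k)
        (\<lambda>l. measure_pmf.expectation (map_pmf (\<lambda>a. l[i:=a]) q) F)"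
    by (rule expectation_bind_finite) (auto simp: iid_finite assms)
  finally show ?thesis by simp
qed

lemma iid_prod:
  fixes g :: "nat \<Rightarrow> 'a \<Rightarrow> real"
  assumes fin: "finite (set_pmf q)"
  shows "measure_pmf.expectation (iid_list q k) (\<lambda>l. \<Prod>i<k. g i (l!i))
       = (\<Prod>i<k. measure_pmf.expectation q (g i))"
proof (induction k arbitrary: g)
  case 0 then show ?case by simp
next
  case (Suc k)
  have "measure_pmf.expectation (iid_list q (Suc k)) (\<lambda>l. \<Prod>i<Suc k. g i (l!i))
     = measure_pmf.expectation q (\<lambda>a. measure_pmf.expectation
          (bind_pmf (iid_list q k) (\<lambda>as. return_pmf (a # as))) (\<lambda>l. \<Prod>i<Suc k. g i (l!i)))"
    by (simp only: iid_list.simps) (rule expectation_bind_finite, auto simp: fin iid_finite)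
  also have "\<dots> = measure_pmf.expectation q (\<lambda>a. measure_pmf.expectation (iid_list q k)
          (\<lambda>as. g 0 a * (\<Prod>i<k. g (Suc i) (as!i))))"
  proof (rule pmf_int_cong)
    fix a
    have "measure_pmf.expectation (bind_pmf (iid_list q k) (\<lambda>as. return_pmf (a # as))) (\<lambda>l. \<Prod>i<Suc k. g i (l!i))
       = measure_pmf.expectation (iid_list q k) (\<lambda>as. measure_pmf.expectation (return_pmf (a # as)) (\<lambda>l. \<Prod>i<Suc k. g i (l!i)))"
      by (rule expectation_bind_finite) (auto simp: fin iid_finite)
    also have "\<dots> = measure_pmf.expectation (iid_list q k) (\<lambda>as. g 0 a * (\<Prod>i<k. g (Suc i) (as!i)))"
      by (simp only: expectation_return_pmf prod.lessThan_Suc_shift nth_Cons_0 nth_Cons_Suc)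
    finally show "measure_pmf.expectation (bind_pmf (iid_list q k) (\<lambda>as. return_pmf (a # as))) (\<lambda>l. \<Prod>i<Suc k. g i (l!i))
       = measure_pmf.expectation (iid_list q k) (\<lambda>as. g 0 a * (\<Prod>i<k. g (Suc i) (as!i)))" .
  qed
  also have "\<dots> = measure_pmf.expectation q (\<lambda>a. g 0 a * (\<Prod>i<k. measure_pmf.expectation q (g (Suc i))))"
    using Suc.IH[of "\<lambda>i. g (Suc i)"] by simp
  also have "\<dots> = (\<Prod>i<Suc k. measure_pmf.expectation q (g i))"
    by (simp only: prod.lessThan_Suc_shift integral_mult_left_zero)
  finally show ?case .
qed

definition upd :: "nat \<Rightarrow> nat \<Rightarrow> bool \<Rightarrow> bool list list \<Rightarrow> bool list list" where
  "upd r j b ms = ms[r := (ms!r)[j:=b]]"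

lemma mask_resample:
  fixes F :: "bool list list \<Rightarrow> real"
  assumes rk: "r < k" and jn: "j < n" and p: "0 \<le> p" "p \<le> 1"
  defines "Msk \<equiv> iid_list (iid_list (bernoulli_pmf p) n) k"
  shows "measure_pmf.expectation Msk F
    = measure_pmf.expectation Msk (\<lambda>ms. p * F (upd r j True ms) + (1 - p) * F (upd r j False ms))"
proof -
  let ?Q = "iid_list (bernoulli_pmf p) n"
  let ?H = "\<lambda>ms. p * F (upd r j True ms) + (1 - p) * F (upd r j False ms)"
  have finQ: "finite (set_pmf ?Q)" by (simp add: iid_finite)
  have "measure_pmf.expectation Msk F
     = measure_pmf.expectation Msk (\<lambda>ms. measure_pmf.expectation ?Q (\<lambda>m. F (ms[r:=m])))"
    unfolding Msk_def by (rule iid_resample_int[OF rk finQ])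
  also have "\<dots> = measure_pmf.expectation Msk (\<lambda>ms. measure_pmf.expectation ?Q (\<lambda>m. ?H (ms[r:=m])))"
  proof (rule pmf_int_cong)
    fix ms assume "ms \<in> set_pmf Msk"
    then have len: "length ms = k" using iid_set unfolding Msk_def by blast
    have "measure_pmf.expectation ?Q (\<lambda>m. F (ms[r:=m]))
       = measure_pmf.expectation ?Q (\<lambda>m. measure_pmf.expectation (bernoulli_pmf p) (\<lambda>b. F (ms[r:=m[j:=b]])))"
      by (rule iid_resample_int[OF jn]) simp
    also have "\<dots> = measure_pmf.expectation ?Q (\<lambda>m. ?H (ms[r:=m]))"
      using p len rk by (simp add: integral_bernoulli_pmf upd_def algebra_simps)
    finally show "measure_pmf.expectation ?Q (\<lambda>m. F (ms[r:=m])) = measure_pmf.expectation ?Q (\<lambda>m. ?H (ms[r:=m]))" .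
  qed
  also have "\<dots> = measure_pmf.expectation Msk ?H"
    unfolding Msk_def by (rule iid_resample_int[OF rk finQ, symmetric])
  finally show ?thesis .
qed



definition zfl :: "bool list \<Rightarrow> nat \<Rightarrow> bool list \<Rightarrow> bool" where
  "zfl x n m = (\<exists>i<n. \<not> x!i \<and> m!i)"
definition ofl :: "bool list \<Rightarrow> nat \<Rightarrow> bool list \<Rightarrow> bool" where
  "ofl x n m = (\<exists>i<n. x!i \<and> m!i)"
definition isclone :: "nat \<Rightarrow> bool list \<Rightarrow> bool" where
  "isclone n m = (\<forall>i<n. \<not> m!i)"
definition Mx :: "(bool list \<Rightarrow> real) \<Rightarrow> bool list \<Rightarrow> bool list list \<Rightarrow> nat set" where
  "Mx f x ms = {j. j < length ms \<and> (\<forall>i<length ms. f (flip x (ms!i)) \<le> f (flip x (ms!j)))}"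
definition sel :: "(bool list \<Rightarrow> real) \<Rightarrow> bool list \<Rightarrow> nat \<Rightarrow> bool list list \<Rightarrow> real" where
  "sel f x r ms = (if r \<in> Mx f x ms then 1 / real (card (Mx f x ms)) else 0)"

lemma flip_len: "length (flip x m) = min (length x) (length m)"
  by (simp add: flip_def)

lemma flip_nth: "i < length x \<Longrightarrow> i < length m \<Longrightarrow> flip x m ! i = (x!i \<noteq> m!i)"
  by (simp add: flip_def)

lemma Mx_sub: "Mx f x ms \<subseteq> {..<length ms}"
  by (auto simp: Mx_def)

lemma Mx_fin: "finite (Mx f x ms)"
  by (rule finite_subset[OF Mx_sub]) simp

lemma Mx_ne: "ms \<noteq> [] \<Longrightarrow> Mx f x ms \<noteq> {}"
proof -
  assume "ms \<noteq> []"
  let ?V = "(\<lambda>i. f (flip x (ms!i))) ` {..<length ms}"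
  have "finite ?V" "?V \<noteq> {}" using \<open>ms \<noteq> []\<close> by auto
  then have "Max ?V \<in> ?V" by (rule Max_in)
  then obtain j where j: "j < length ms" "f (flip x (ms!j)) = Max ?V" by auto
  have "\<forall>i<length ms. f (flip x (ms!i)) \<le> f (flip x (ms!j))"
    using j \<open>finite ?V\<close> by auto
  then have "j \<in> Mx f x ms" using j by (simp add: Mx_def)
  then show ?thesis by blast
qed

lemma sel_nonneg: "0 \<le> sel f x r ms" by (simp add: sel_def)

lemma sel_le1: "sel f x r ms \<le> 1"
proof (cases "r \<in> Mx f x ms")
  case True
  then have "card (Mx f x ms) \<ge> 1" using Mx_fin by (metis One_nat_def Suc_leI card_gt_0_iff empty_iff)
  then show ?thesis using True by (simp add: sel_def)
qed (simp add: sel_def)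

lemma sum_sel_gen:
  assumes "ms \<noteq> []"
  shows "(\<Sum>r<length ms. sel f x r ms * h r) = (\<Sum>j\<in>Mx f x ms. h j) / real (card (Mx f x ms))"
proof -
  have "(\<Sum>r<length ms. sel f x r ms * h r) = (\<Sum>r\<in>{..<length ms} \<inter> Mx f x ms. h r / real (card (Mx f x ms)))"
    by (simp add: sel_def sum.inter_restrict) (rule sum.cong, auto)
  also have "{..<length ms} \<inter> Mx f x ms = Mx f x ms" using Mx_sub by blast
  finally show ?thesis by (simp add: sum_divide_distrib)
qed

lemma sum_sel: "ms \<noteq> [] \<Longrightarrow> (\<Sum>r<length ms. sel f x r ms) = 1"
  using sum_sel_gen[of ms f x "\<lambda>_. 1"] Mx_ne[of ms f x] Mx_fin[of f x ms] by simp

locale S =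
  fixes x :: "bool list" and n :: nat and f :: "bool list \<Rightarrow> real"
  assumes len: "length x = n" and mono: "monotone_pb n f"
begin

lemma flip_n: "length m = n \<Longrightarrow> length (flip x m) = n"
  using len by (simp add: flip_len)

lemma flip_clone: "length m = n \<Longrightarrow> flip x m = x \<longleftrightarrow> isclone n m"
  using len by (auto simp: list_eq_iff_nth_eq flip_n flip_nth isclone_def)

lemma mono': "length y = n \<Longrightarrow> length z = n \<Longrightarrow> y \<noteq> z \<Longrightarrow> (\<forall>i<n. z!i \<longrightarrow> y!i) \<Longrightarrow> f z < f y"
  using mono[unfolded monotone_pb_def, rule_format, of y z] by simp

lemma nozero_le:
  assumes "length m = n" "\<not> zfl x n m" "\<not> isclone n m"
  shows "f (flip x m) < f x"
proof (rule mono')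
  show "x \<noteq> flip x m" using flip_clone assms by metis
  show "\<forall>i<n. flip x m ! i \<longrightarrow> x ! i"
    using assms len by (auto simp: flip_nth zfl_def)
qed (use assms len flip_n in auto)

lemma zeroonly_gt:
  assumes "length m = n" "zfl x n m" "\<not> ofl x n m"
  shows "f x < f (flip x m)"
proof (rule mono')
  have "\<not> isclone n m" using assms(2) by (auto simp: zfl_def isclone_def)
  then show "flip x m \<noteq> x" using flip_clone assms by metis
  show "\<forall>i<n. x ! i \<longrightarrow> flip x m ! i"
    using assms len by (auto simp: flip_nth ofl_def)
qed (use assms len flip_n in auto)

lemma clone_wins:
  assumes good: "\<forall>m\<in>set ms. length m = n" and r: "r \<in> Mx f x ms"
    and i: "i < length ms" "isclone n (ms!i)" and nc: "\<not> isclone n (ms!r)"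
  shows "zfl x n (ms!r)"
proof (rule ccontr)
  assume "\<not> zfl x n (ms!r)"
  have rl: "r < length ms" using r by (simp add: Mx_def)
  then have "f (flip x (ms!r)) < f x" using nozero_le good nc \<open>\<not> zfl x n (ms!r)\<close> by auto
  moreover have "f (flip x (ms!i)) \<le> f (flip x (ms!r))" using r i by (simp add: Mx_def)
  moreover have "flip x (ms!i) = x" using flip_clone i good by auto
  ultimately show False by simp
qed

lemma B0_wins:
  assumes good: "\<forall>m\<in>set ms. length m = n" and r: "r \<in> Mx f x ms"
    and i: "i < length ms" "zfl x n (ms!i)" "\<not> ofl x n (ms!i)"
  shows "zfl x n (ms!r)"
proof (rule ccontr)
  assume nz: "\<not> zfl x n (ms!r)"
  have rl: "r < length ms" using r by (simp add: Mx_def)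
  have "f x < f (flip x (ms!i))" using zeroonly_gt good i by auto
  moreover have "f (flip x (ms!i)) \<le> f (flip x (ms!r))" using r i by (simp add: Mx_def)
  moreover have "f (flip x (ms!r)) \<le> f x"
  proof (cases "isclone n (ms!r)")
    case True
    have "length (ms!r) = n" using good rl nth_mem by blast
    then have "flip x (ms!r) = x" using flip_clone True by simp
    then show ?thesis by simp
  next
    case False then show ?thesis using nozero_le good rl nz by (auto intro: less_imp_le)
  qed
  ultimately show False by simp
qed


lemma zfl_upd: "j < length m \<Longrightarrow> x!j \<Longrightarrow> zfl x n (m[j:=b]) = zfl x n m"
  unfolding zfl_def by (metis nth_list_update_neq)

lemma pw2:
  assumes good: "\<forall>m\<in>set ms. length m = n" and rk: "r < length ms" and jn: "j < n" and xj: "x!j"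
    and p: "0 \<le> p" "p \<le> 1"
  shows "sel f x r (upd r j True ms) \<le>
    (p * sel f x r (upd r j True ms) + (1-p) * sel f x r (upd r j False ms)) * (if zfl x n (ms!r) then 1 else 0)
    + (if \<exists>i<length ms. i \<noteq> r \<and> isclone n (ms!i) then 0 else 1)"
proof -
  define ms1 where "ms1 = upd r j True ms"
  define ms0 where "ms0 = upd r j False ms"
  define a where "a = sel f x r ms1"
  define b where "b = sel f x r ms0"
  have a01: "0 \<le> a" "a \<le> 1" unfolding a_def by (rule sel_nonneg, rule sel_le1)
  have b0: "0 \<le> b" unfolding b_def by (rule sel_nonneg)
  have lr: "length (ms!r) = n" using good rk nth_mem by blast
  show ?thesis
  proof (cases "\<exists>i<length ms. i \<noteq> r \<and> isclone n (ms!i)")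
    case False
    have "0 \<le> (p * a + (1-p) * b) * (if zfl x n (ms!r) then 1 else 0)"
      using a01 b0 p by simp
    moreover have "(if \<exists>i<length ms. i \<noteq> r \<and> isclone n (ms!i) then 0 else 1) = (1::real)"
      using False by simp
    ultimately show ?thesis using a01 unfolding a_def b_def ms1_def ms0_def by linarith
  next
    case True
    then obtain i where i: "i < length ms" "i \<noteq> r" "isclone n (ms!i)" by blast
    show ?thesis
    proof (cases "r \<in> Mx f x ms1")
      case False
      then have "a = 0" by (simp add: a_def sel_def)
      then show ?thesis using b0 p unfolding a_def b_def ms1_def ms0_def by simp
    next
      case rM: True
      have len1: "length ms1 = length ms" "length ms0 = length ms" by (simp_all add: ms1_def ms0_def upd_def)
      have n1: "\<And>i'. i' \<noteq> r \<Longrightarrow> ms1!i' = ms!i'" "\<And>i'. i' \<noteq> r \<Longrightarrow> ms0!i' = ms!i'"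
        by (simp_all add: ms1_def ms0_def upd_def)
      have r1: "ms1!r = (ms!r)[j:=True]" "ms0!r = (ms!r)[j:=False]"
        using rk by (simp_all add: ms1_def ms0_def upd_def)
      have good1: "\<forall>m\<in>set ms1. length m = n"
        using good lr by (auto simp: ms1_def upd_def dest: set_update_subset_insert[THEN subsetD])
      have nc: "\<not> isclone n (ms1!r)" using r1 jn lr by (auto simp: isclone_def)
      have "zfl x n (ms1!r)"
        using clone_wins[OF good1 rM _ _ nc, of i] i len1 n1 by simp
      then have Z: "zfl x n (ms!r)" using r1 zfl_upd jn lr xj by simp
      have y: "f (flip x (ms1!r)) < f (flip x (ms0!r))"
      proof (rule mono')
        show "length (flip x (ms0 ! r)) = n" "length (flip x (ms1 ! r)) = n"
          using r1 lr flip_n by simp_all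
        have "flip x (ms0!r) ! j \<noteq> flip x (ms1!r) ! j"
          using r1 lr jn len xj by (simp add: flip_nth)
        then show "flip x (ms0 ! r) \<noteq> flip x (ms1 ! r)" by metis
        show "\<forall>l<n. flip x (ms1 ! r) ! l \<longrightarrow> flip x (ms0 ! r) ! l"
          using r1 lr jn len xj by (auto simp: flip_nth nth_list_update)
      qed
      have M0: "Mx f x ms0 = {r}"
      proof -
        have le1: "\<And>i'. i' < length ms \<Longrightarrow> f (flip x (ms1!i')) \<le> f (flip x (ms1!r))"
          using rM len1 by (simp add: Mx_def)
        have lt: "\<And>i'. i' < length ms \<Longrightarrow> i' \<noteq> r \<Longrightarrow> f (flip x (ms0!i')) < f (flip x (ms0!r))"
          using le1 y n1 by (metis order.strict_trans1)
        have "r \<in> Mx f x ms0"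
          unfolding Mx_def using len1 rk lt by (auto intro: less_imp_le)
        moreover have "i' = r" if "i' \<in> Mx f x ms0" for i'
        proof -
          have "i' < length ms" "f (flip x (ms0!r)) \<le> f (flip x (ms0!i'))"
            using that len1 rk by (auto simp: Mx_def)
          then show "i' = r" using lt by force
        qed
        ultimately show ?thesis by blast
      qed
      have "b = 1" using M0 by (simp add: b_def sel_def)
      then have "a \<le> (p * a + (1-p) * b) * 1"
      proof -
        have "0 \<le> (1-p) * (1-a)" using a01 p by simp
        then show ?thesis using \<open>b = 1\<close> by (simp add: algebra_simps)
      qed
      then show ?thesis using Z unfolding a_def b_def ms1_def ms0_def by simp
    qed
  qed
qed

end



lemma prod01:
  fixes g :: "nat \<Rightarrow> real"
  assumes "\<And>i. i < k \<Longrightarrow> g i = 0 \<or> g i = 1"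
  shows "(\<Prod>i<k. g i) = (if \<exists>i<k. g i = 0 then 0 else 1::real)"
proof (cases "\<exists>i<k. g i = 0")
  case True then show ?thesis by (auto simp: prod_zero_iff)
next
  case False
  then have "\<And>i. i \<in> {..<k} \<Longrightarrow> g i = 1" using assms by auto
  then show ?thesis using False by (simp add: prod.neutral)
qed

lemma prod_if_eq: "r < k \<Longrightarrow> (\<Prod>i<k. if i = r then 1 else (c::real)) = c ^ (k - 1)"
proof -
  assume rk: "r < k"
  have "(\<Prod>i<k. if i = r then 1 else c) = (\<Prod>i\<in>{..<k} - {r}. c)"
    by (rule prod.mono_neutral_cong_right) auto
  also have "\<dots> = c ^ (k - 1)" using rk by simp
  finally show ?thesis .
qed

lemma prod_if_pow: "(\<Prod>i<(n::nat). if P i then (c::real) else 1) = c ^ card {i. i < n \<and> P i}"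
proof -
  have "(\<Prod>i<n. if P i then c else 1) = (\<Prod>i\<in>{i. i < n \<and> P i}. c)"
    by (rule prod.mono_neutral_cong_right) auto
  then show ?thesis by simp
qed

lemma exp_const_pmf: "measure_pmf.expectation M (\<lambda>_. c::real) = c"
  by simp


lemma concav:
  fixes th u :: real
  assumes "0 \<le> th" "th \<le> 1" "0 \<le> u" "u \<le> 1"
  shows "th * (1 - (1 - u) ^ k) \<le> 1 - (1 - th * u) ^ k"
proof (induction k)
  case 0 then show ?case by simp
next
  case (Suc k)
  have g: "0 \<le> 1 - (1 - u) ^ k" using assms by (simp add: power_le_one)
  have "th * (1 - (1 - u) ^ Suc k) = th * u + (1 - u) * (th * (1 - (1 - u) ^ k))"
    by (simp add: algebra_simps)
  also have "\<dots> \<le> th * u + (1 - th * u) * (th * (1 - (1 - u) ^ k))"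
  proof -
    have "1 - u \<le> 1 - th * u" using assms by (simp add: mult_left_le_one_le)
    then show ?thesis using mult_right_mono[OF _ mult_nonneg_nonneg[OF assms(1) g]] by simp
  qed
  also have "\<dots> \<le> th * u + (1 - th * u) * (1 - (1 - th * u) ^ k)"
  proof -
    have "0 \<le> 1 - th * u" using assms by (simp add: mult_le_one)
    then show ?thesis using mult_left_mono[OF Suc.IH] by simp
  qed
  also have "\<dots> = 1 - (1 - th * u) ^ Suc k" by (simp add: algebra_simps)
  finally show ?case .
qed

locale S2 = S +
  fixes p :: real and k :: nat
  assumes p0: "0 \<le> p" and p1: "p \<le> 1"
begin

abbreviation "Q \<equiv> iid_list (bernoulli_pmf p) n"
abbreviation "Mk \<equiv> iid_list Q k"

lemma finQ: "finite (set_pmf Q)" by (simp add: iid_finite)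
lemma finMk: "finite (set_pmf Mk)" by (simp add: iid_finite finQ)

lemma suppQ: "m \<in> set_pmf Q \<Longrightarrow> length m = n"
  using iid_set by blast

lemma supp: "ms \<in> set_pmf Mk \<Longrightarrow> length ms = k \<and> (\<forall>m\<in>set ms. length m = n)"
proof -
  assume "ms \<in> set_pmf Mk"
  then have "length ms = k" "set ms \<subseteq> set_pmf Q" using iid_set by blast+
  then show ?thesis using suppQ by blast
qed

lemma intMk: "integrable (measure_pmf Mk) (F :: _ \<Rightarrow> real)"
  by (rule integrable_measure_pmf_finite[OF finMk])

lemma intQ: "integrable (measure_pmf Q) (F :: _ \<Rightarrow> real)"
  by (rule integrable_measure_pmf_finite[OF finQ])

definition Zi :: "bool list \<Rightarrow> real" where "Zi m = (if zfl x n m then 1 else 0::real)"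
definition Gr :: "nat \<Rightarrow> bool list list \<Rightarrow> real" where
  "Gr r ms = (if \<exists>i<length ms. i \<noteq> r \<and> isclone n (ms!i) then 0 else 1::real)"

lemma Obit:
  assumes rk: "r < k" and jn: "j < n" and xj: "x!j"
  shows "measure_pmf.expectation Mk (\<lambda>ms. sel f x r ms * (if ms!r!j then 1 else 0::real))
    \<le> p * (measure_pmf.expectation Mk (\<lambda>ms. sel f x r ms * Zi (ms!r))
          + measure_pmf.expectation Mk (Gr r))"
proof -
  let ?a = "\<lambda>ms. sel f x r (upd r j True ms)"
  let ?b = "\<lambda>ms. sel f x r (upd r j False ms)"
  have updr: "(upd r j bb ms) ! r = (ms!r)[j:=bb]" if "ms \<in> set_pmf Mk" for ms bb
    using supp[OF that] rk by (simp add: upd_def)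
  have lr: "length (ms!r) = n" if "ms \<in> set_pmf Mk" for ms
    using supp[OF that] rk nth_mem by blast
  have "measure_pmf.expectation Mk (\<lambda>ms. sel f x r ms * (if ms!r!j then 1 else 0::real))
      = measure_pmf.expectation Mk (\<lambda>ms. p * (sel f x r (upd r j True ms) * (if (upd r j True ms)!r!j then 1 else 0::real))
          + (1-p) * (sel f x r (upd r j False ms) * (if (upd r j False ms)!r!j then 1 else 0::real)))"
    by (rule mask_resample[OF rk jn p0 p1])
  also have "\<dots> = measure_pmf.expectation Mk (\<lambda>ms. p * ?a ms)"
    by (rule pmf_int_cong) (simp add: updr lr jn)
  also have "\<dots> \<le> measure_pmf.expectation Mk (\<lambda>ms. p * ((p * ?a ms + (1-p) * ?b ms) * Zi (ms!r) + Gr r ms))"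
  proof (rule pmf_int_mono[OF finMk])
    fix ms assume ms: "ms \<in> set_pmf Mk"
    have "?a ms \<le> (p * ?a ms + (1-p) * ?b ms) * Zi (ms!r) + Gr r ms"
      using pw2[OF conjunct2[OF supp[OF ms]] _ jn xj p0 p1, of r] supp[OF ms] rk
      unfolding Zi_def Gr_def by simp
    then show "p * ?a ms \<le> p * ((p * ?a ms + (1-p) * ?b ms) * Zi (ms!r) + Gr r ms)"
      using p0 by (rule mult_left_mono)
  qed
  also have "\<dots> = p * (measure_pmf.expectation Mk (\<lambda>ms. (p * ?a ms + (1-p) * ?b ms) * Zi (ms!r))
          + measure_pmf.expectation Mk (Gr r))"
    by (simp add: intMk)
  also have "measure_pmf.expectation Mk (\<lambda>ms. (p * ?a ms + (1-p) * ?b ms) * Zi (ms!r))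
     = measure_pmf.expectation Mk (\<lambda>ms. p * (sel f x r (upd r j True ms) * Zi ((upd r j True ms)!r))
          + (1-p) * (sel f x r (upd r j False ms) * Zi ((upd r j False ms)!r)))"
    by (rule pmf_int_cong) (simp add: updr lr jn Zi_def zfl_upd xj algebra_simps)
  also have "\<dots> = measure_pmf.expectation Mk (\<lambda>ms. sel f x r ms * Zi (ms!r))"
    by (rule mask_resample[OF rk jn p0 p1, symmetric])
  finally show ?thesis .
qed


lemma EQ_prod:
  fixes g :: "nat \<Rightarrow> bool \<Rightarrow> real"
  shows "measure_pmf.expectation Q (\<lambda>m. \<Prod>i<n. g i (m!i)) = (\<Prod>i<n. g i True * p + g i False * (1 - p))"
  by (simp add: iid_prod integral_bernoulli_pmf p0 p1)

lemma E_clone: "measure_pmf.expectation Q (\<lambda>m. if isclone n m then 1 else 0::real) = (1-p)^n"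
proof -
  have "measure_pmf.expectation Q (\<lambda>m. if isclone n m then 1 else 0::real)
     = measure_pmf.expectation Q (\<lambda>m. \<Prod>i<n. (\<lambda>i b. if b then 0 else 1::real) i (m!i))"
  proof (rule pmf_int_cong)
    fix m
    show "(if isclone n m then 1 else 0::real) = (\<Prod>i<n. (\<lambda>i b. if b then 0 else (1::real)) i (m!i))"
      by (subst prod01) (auto simp: isclone_def)
  qed
  also have "\<dots> = (1-p)^n" by (subst EQ_prod) simp
  finally show ?thesis .
qed

lemma E_exists:
  "measure_pmf.expectation Mk (\<lambda>ms. if \<exists>i<k. P (ms!i) then 1 else 0::real)
    = 1 - (1 - measure_pmf.expectation Q (\<lambda>m. if P m then 1 else 0::real)) ^ k"
proof -
  have "measure_pmf.expectation Mk (\<lambda>ms. if \<exists>i<k. P (ms!i) then 1 else 0::real)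
     = measure_pmf.expectation Mk (\<lambda>ms. 1 - (\<Prod>i<k. (\<lambda>i m. if P m then 0 else 1::real) i (ms!i)))"
  proof (rule pmf_int_cong)
    fix ms
    show "(if \<exists>i<k. P (ms!i) then 1 else 0::real) = 1 - (\<Prod>i<k. (\<lambda>i m. if P m then 0 else (1::real)) i (ms!i))"
      by (subst prod01) auto
  qed
  also have "\<dots> = 1 - (\<Prod>i<k. measure_pmf.expectation Q (\<lambda>m. if P m then 0 else 1::real))"
    using iid_prod[OF finQ, where g="\<lambda>i m. if P m then 0 else 1" and k=k] by (simp add: intMk)
  also have "measure_pmf.expectation Q (\<lambda>m. if P m then 0 else 1::real) = 1 - measure_pmf.expectation Q (\<lambda>m. if P m then 1 else 0::real)"
  proof -
    have "measure_pmf.expectation Q (\<lambda>m. if P m then 0 else 1::real) = measure_pmf.expectation Q (\<lambda>m. 1 - (if P m then 1 else 0::real))"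
      by (rule pmf_int_cong) simp
    also have "\<dots> = 1 - measure_pmf.expectation Q (\<lambda>m. if P m then 1 else 0::real)"
      by (simp add: intQ)
    finally show ?thesis .
  qed
  finally show ?thesis by simp
qed

lemma E_Gr: "r < k \<Longrightarrow> measure_pmf.expectation Mk (Gr r) = (1 - (1-p)^n) ^ (k - 1)"
proof -
  assume rk: "r < k"
  have "measure_pmf.expectation Mk (Gr r)
     = measure_pmf.expectation Mk (\<lambda>ms. \<Prod>i<k. (\<lambda>i m. if i = r then 1 else if isclone n m then 0 else 1::real) i (ms!i))"
  proof (rule pmf_int_cong)
    fix ms assume "ms \<in> set_pmf Mk"
    then have "length ms = k" using supp by blast
    then show "Gr r ms = (\<Prod>i<k. (\<lambda>i m. if i = r then 1 else if isclone n m then 0 else (1::real)) i (ms!i))"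
      unfolding Gr_def by (subst prod01) auto
  qed
  also have "\<dots> = (\<Prod>i<k. measure_pmf.expectation Q (\<lambda>m. if i = r then 1 else if isclone n m then 0 else 1::real))"
    using iid_prod[OF finQ, where g="\<lambda>i m. if i = r then 1 else if isclone n m then 0 else 1" and k=k] by simp
  also have "\<dots> = (\<Prod>i<k. if i = r then 1 else 1 - (1-p)^n)"
  proof (rule prod.cong[OF refl])
    fix i
    have "measure_pmf.expectation Q (\<lambda>m. if isclone n m then 0 else 1::real) = measure_pmf.expectation Q (\<lambda>m. 1 - (if isclone n m then 1 else 0::real))"
      by (rule pmf_int_cong) simp
    also have "\<dots> = 1 - (1-p)^n" using E_clone by (simp add: intQ)
    finally show "measure_pmf.expectation Q (\<lambda>m. if i = r then 1 else if isclone n m then 0 else 1::real) = (if i = r then 1 else 1 - (1-p)^n)"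
      by simp
  qed
  also have "\<dots> = (1 - (1-p)^n) ^ (k - 1)" using rk by (rule prod_if_eq)
  finally show ?thesis .
qed


definition "J = {i. i < n \<and> x!i}"
definition "Jz = {i. i < n \<and> \<not> x!i}"

lemma cardJ: "card J + card Jz = n"
proof -
  have "card J + card Jz = card (J \<union> Jz)"
    by (rule card_Un_disjoint[symmetric]) (auto simp: J_def Jz_def)
  also have "J \<union> Jz = {..<n}" by (auto simp: J_def Jz_def)
  finally show ?thesis by simp
qed

lemma cardJz: "card Jz = zeros x"
  using len by (simp add: zeros_def length_filter_conv_card Jz_def)

lemma E_nzfl: "measure_pmf.expectation Q (\<lambda>m. if \<not> zfl x n m then 1 else 0::real) = (1-p) ^ card Jz"
proof -
  have "measure_pmf.expectation Q (\<lambda>m. if \<not> zfl x n m then 1 else 0::real)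
     = measure_pmf.expectation Q (\<lambda>m. \<Prod>i<n. (\<lambda>i b. if \<not> x!i \<and> b then 0 else 1::real) i (m!i))"
  proof (rule pmf_int_cong)
    fix m
    show "(if \<not> zfl x n m then 1 else 0::real) = (\<Prod>i<n. (\<lambda>i b. if \<not> x!i \<and> b then 0 else 1::real) i (m!i))"
      by (subst prod01) (auto simp: zfl_def)
  qed
  also have "\<dots> = (\<Prod>i<n. if \<not> x!i then 1 - p else 1)"
    by (subst EQ_prod) (rule prod.cong, auto)
  also have "\<dots> = (1-p) ^ card Jz" unfolding Jz_def by (rule prod_if_pow)
  finally show ?thesis .
qed

lemma E_nofl: "measure_pmf.expectation Q (\<lambda>m. if \<not> ofl x n m then 1 else 0::real) = (1-p) ^ card J"
proof -
  have "measure_pmf.expectation Q (\<lambda>m. if \<not> ofl x n m then 1 else 0::real)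
     = measure_pmf.expectation Q (\<lambda>m. \<Prod>i<n. (\<lambda>i b. if x!i \<and> b then 0 else 1::real) i (m!i))"
  proof (rule pmf_int_cong)
    fix m
    show "(if \<not> ofl x n m then 1 else 0::real) = (\<Prod>i<n. (\<lambda>i b. if x!i \<and> b then 0 else 1::real) i (m!i))"
      by (subst prod01) (auto simp: ofl_def)
  qed
  also have "\<dots> = (\<Prod>i<n. if x!i then 1 - p else 1)"
    by (subst EQ_prod) (rule prod.cong, auto)
  also have "\<dots> = (1-p) ^ card J" unfolding J_def by (rule prod_if_pow)
  finally show ?thesis .
qed

lemma E_zfl: "measure_pmf.expectation Q (\<lambda>m. if zfl x n m then 1 else 0::real) = 1 - (1-p) ^ card Jz"
proof -
  have "measure_pmf.expectation Q (\<lambda>m. if zfl x n m then 1 else 0::real)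
      = measure_pmf.expectation Q (\<lambda>m. 1 - (if \<not> zfl x n m then 1 else 0::real))"
    by (rule pmf_int_cong) simp
  also have "\<dots> = 1 - (1-p) ^ card Jz" using E_nzfl by (simp add: intQ)
  finally show ?thesis .
qed

lemma E_zo: "measure_pmf.expectation Q (\<lambda>m. if zfl x n m \<and> \<not> ofl x n m then 1 else 0::real)
   = (1-p) ^ card J * (1 - (1-p) ^ card Jz)"
proof -
  have "measure_pmf.expectation Q (\<lambda>m. if zfl x n m \<and> \<not> ofl x n m then 1 else 0::real)
      = measure_pmf.expectation Q (\<lambda>m. (if \<not> ofl x n m then 1 else 0::real) - (if isclone n m then 1 else 0::real))"
    by (rule pmf_int_cong) (auto simp: zfl_def ofl_def isclone_def)
  also have "\<dots> = (1-p) ^ card J - (1-p) ^ n" using E_nofl E_clone by (simp add: intQ)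
  also have "\<dots> = (1-p) ^ card J * (1 - (1-p) ^ card Jz)"
    using cardJ by (metis power_add right_diff_distrib mult.right_neutral)
  finally show ?thesis .
qed


definition SZ :: "bool list list \<Rightarrow> real" where "SZ ms = (\<Sum>r<k. sel f x r ms * Zi (ms!r))"
definition Oc :: "bool list \<Rightarrow> real" where "Oc m = (\<Sum>j\<in>J. if m!j then 1 else 0::real)"
definition SO :: "bool list list \<Rightarrow> real" where "SO ms = (\<Sum>r<k. sel f x r ms * Oc (ms!r))"

lemma finJ: "finite J" by (simp add: J_def)

lemma E_SO: "measure_pmf.expectation Mk SO
   \<le> p * card J * (measure_pmf.expectation Mk SZ + k * (1 - (1-p)^n) ^ (k - 1))"
proof -
  have "measure_pmf.expectation Mk SO
      = measure_pmf.expectation Mk (\<lambda>ms. \<Sum>r<k. \<Sum>j\<in>J. sel f x r ms * (if ms!r!j then 1 else 0::real))"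
    by (rule pmf_int_cong) (simp add: SO_def Oc_def sum_distrib_left)
  also have "\<dots> = (\<Sum>r<k. \<Sum>j\<in>J. measure_pmf.expectation Mk (\<lambda>ms. sel f x r ms * (if ms!r!j then 1 else 0::real)))"
    by (simp add: intMk)
  also have "\<dots> \<le> (\<Sum>r<k. \<Sum>j\<in>J. p * (measure_pmf.expectation Mk (\<lambda>ms. sel f x r ms * Zi (ms!r))
          + measure_pmf.expectation Mk (Gr r)))"
  proof (rule sum_mono, rule sum_mono)
    fix r j assume "r \<in> {..<k}" "j \<in> J"
    then show "measure_pmf.expectation Mk (\<lambda>ms. sel f x r ms * (if ms!r!j then 1 else 0::real))
        \<le> p * (measure_pmf.expectation Mk (\<lambda>ms. sel f x r ms * Zi (ms!r)) + measure_pmf.expectation Mk (Gr r))"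
      by (intro Obit) (auto simp: J_def)
  qed
  also have "\<dots> = p * card J * ((\<Sum>r<k. measure_pmf.expectation Mk (\<lambda>ms. sel f x r ms * Zi (ms!r)))
          + (\<Sum>r<k. measure_pmf.expectation Mk (Gr r)))"
    by (simp add: sum_distrib_left sum.distrib algebra_simps)
  also have "(\<Sum>r<k. measure_pmf.expectation Mk (\<lambda>ms. sel f x r ms * Zi (ms!r))) = measure_pmf.expectation Mk SZ"
  proof -
    have "measure_pmf.expectation Mk SZ = measure_pmf.expectation Mk (\<lambda>ms. \<Sum>r<k. sel f x r ms * Zi (ms!r))"
      by (rule pmf_int_cong) (simp add: SZ_def)
    then show ?thesis by (simp add: intMk)
  qed
  also have "(\<Sum>r<k. measure_pmf.expectation Mk (Gr r)) = k * (1 - (1-p)^n) ^ (k - 1)"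
    by (simp add: E_Gr)
  finally show ?thesis .
qed

lemma SZ_pw:
  assumes ms: "ms \<in> set_pmf Mk"
  shows "(if \<exists>i<k. zfl x n (ms!i) \<and> \<not> ofl x n (ms!i) then 1 else 0::real) \<le> SZ ms"
proof (cases "\<exists>i<k. zfl x n (ms!i) \<and> \<not> ofl x n (ms!i)")
  case True
  then obtain i where i: "i < k" "zfl x n (ms!i)" "\<not> ofl x n (ms!i)" by blast
  have lk: "length ms = k" and good: "\<forall>m\<in>set ms. length m = n" using supp[OF ms] by auto
  have "SZ ms = (\<Sum>r<k. sel f x r ms)"
  proof (unfold SZ_def, rule sum.cong[OF refl])
    fix r assume "r \<in> {..<k}"
    show "sel f x r ms * Zi (ms!r) = sel f x r ms"
    proof (cases "r \<in> Mx f x ms")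
      case True
      then have "zfl x n (ms!r)" using B0_wins[OF good True, of i] i lk by simp
      then show ?thesis by (simp add: Zi_def)
    qed (simp add: sel_def)
  qed
  also have "\<dots> = 1"
  proof -
    have "ms \<noteq> []" using i lk by auto
    then show ?thesis using sum_sel[of ms f x] lk by simp
  qed
  finally show ?thesis using True by simp
next
  case False
  have "0 \<le> SZ ms" unfolding SZ_def by (intro sum_nonneg) (simp add: sel_nonneg Zi_def)
  moreover have "(if \<exists>i<k. zfl x n (ms!i) \<and> \<not> ofl x n (ms!i) then 1 else 0::real) = 0"
    using False by (simp only: if_False)
  ultimately show ?thesis by simp
qed

lemma E_SZ: "1 - (1 - (1-p) ^ card J * (1 - (1-p) ^ card Jz)) ^ k \<le> measure_pmf.expectation Mk SZ"
proof -
  have "1 - (1 - (1-p) ^ card J * (1 - (1-p) ^ card Jz)) ^ k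
     = measure_pmf.expectation Mk (\<lambda>ms. if \<exists>i<k. zfl x n (ms!i) \<and> \<not> ofl x n (ms!i) then 1 else 0::real)"
    using E_exists[of "\<lambda>m. zfl x n m \<and> \<not> ofl x n m"] E_zo by simp
  also have "\<dots> \<le> measure_pmf.expectation Mk SZ"
    by (rule pmf_int_mono[OF finMk SZ_pw])
  finally show ?thesis .
qed


abbreviation "STEP \<equiv> bind_pmf Mk (\<lambda>ms. map_pmf (\<lambda>x'. (ms, x')) (select_best f (map (flip x) ms)))"

lemma Mx_eq: "{j. j < length (map (flip x) ms) \<and> (\<forall>i<length (map (flip x) ms). f (map (flip x) ms ! i) \<le> f (map (flip x) ms ! j))}
   = Mx f x ms"
  by (auto simp: Mx_def)

lemma E_step:
  fixes \<phi> :: "bool list list \<times> bool list \<Rightarrow> real"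
  assumes k1: "k \<ge> 1"
  shows "measure_pmf.expectation STEP \<phi>
     = measure_pmf.expectation Mk (\<lambda>ms. \<Sum>r<k. sel f x r ms * \<phi> (ms, flip x (ms!r)))"
proof -
  have ne: "ms \<noteq> []" if "ms \<in> set_pmf Mk" for ms using supp[OF that] k1 by auto
  have "measure_pmf.expectation STEP \<phi>
     = measure_pmf.expectation Mk (\<lambda>ms. measure_pmf.expectation
          (map_pmf (\<lambda>x'. (ms, x')) (select_best f (map (flip x) ms))) \<phi>)"
  proof (rule expectation_bind_finite[OF finMk])
    fix ms assume "ms \<in> set_pmf Mk"
    let ?S = "{j. j < length (map (flip x) ms) \<and> (\<forall>i<length (map (flip x) ms). f (map (flip x) ms ! i) \<le> f (map (flip x) ms ! j))}"
    have fS: "set_pmf (pmf_of_set ?S) = Mx f x ms"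
      unfolding Mx_eq using Mx_ne ne[OF \<open>ms \<in> set_pmf Mk\<close>] Mx_fin by (simp add: set_pmf_of_set)
    have "set_pmf (map_pmf (\<lambda>x'. (ms, x')) (select_best f (map (flip x) ms)))
       = (\<lambda>x'. (ms, x')) ` (\<lambda>j. map (flip x) ms ! j) ` Mx f x ms"
      unfolding select_best_def set_map_pmf fS ..
    then show "finite (set_pmf (map_pmf (\<lambda>x'. (ms, x')) (select_best f (map (flip x) ms))))"
      using Mx_fin by simp
  qed
  also have "\<dots> = measure_pmf.expectation Mk (\<lambda>ms. \<Sum>r<k. sel f x r ms * \<phi> (ms, flip x (ms!r)))"
  proof (rule pmf_int_cong)
    fix ms assume ms: "ms \<in> set_pmf Mk"
    have lk: "length ms = k" using supp[OF ms] by simp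
    have "measure_pmf.expectation (map_pmf (\<lambda>x'. (ms, x')) (select_best f (map (flip x) ms))) \<phi>
        = (\<Sum>j\<in>Mx f x ms. \<phi> (ms, flip x (ms!j))) / real (card (Mx f x ms))"
    proof -
      let ?S = "{j. j < length (map (flip x) ms) \<and> (\<forall>i<length (map (flip x) ms). f (map (flip x) ms ! i) \<le> f (map (flip x) ms ! j))}"
      have "measure_pmf.expectation (map_pmf (\<lambda>x'. (ms, x')) (select_best f (map (flip x) ms))) \<phi>
          = measure_pmf.expectation (pmf_of_set ?S) (\<lambda>j. \<phi> (ms, map (flip x) ms ! j))"
        unfolding select_best_def by (simp only: integral_map_pmf)
      also have "\<dots> = measure_pmf.expectation (pmf_of_set (Mx f x ms)) (\<lambda>j. \<phi> (ms, map (flip x) ms ! j))"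
        unfolding Mx_eq ..
      also have "\<dots> = (\<Sum>j\<in>Mx f x ms. \<phi> (ms, map (flip x) ms ! j)) / real (card (Mx f x ms))"
        using ne[OF ms] Mx_ne Mx_fin by (simp add: integral_pmf_of_set)
      also have "\<dots> = (\<Sum>j\<in>Mx f x ms. \<phi> (ms, flip x (ms!j))) / real (card (Mx f x ms))"
        using Mx_sub[of f x ms] by (auto intro!: sum.cong)
      finally show ?thesis .
    qed
    also have "\<dots> = (\<Sum>r<k. sel f x r ms * \<phi> (ms, flip x (ms!r)))"
      using sum_sel_gen[OF ne[OF ms], of f x "\<lambda>r. \<phi> (ms, flip x (ms!r))"] lk by simp
    finally show "measure_pmf.expectation (map_pmf (\<lambda>x'. (ms, x')) (select_best f (map (flip x) ms))) \<phi>
        = (\<Sum>r<k. sel f x r ms * \<phi> (ms, flip x (ms!r)))" .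
  qed
  finally show ?thesis .
qed

lemma step_bound:
  fixes \<phi> :: "bool list list \<times> bool list \<Rightarrow> real"
  assumes k1: "k \<ge> 1" and pw: "\<And>ms m. length m = n \<Longrightarrow> Zi m - Oc m \<le> \<phi> (ms, flip x m)"
  shows "measure_pmf.expectation Mk SZ - measure_pmf.expectation Mk SO \<le> measure_pmf.expectation STEP \<phi>"
proof -
  have "measure_pmf.expectation Mk SZ - measure_pmf.expectation Mk SO
      = measure_pmf.expectation Mk (\<lambda>ms. SZ ms - SO ms)" by (simp add: intMk)
  also have "\<dots> \<le> measure_pmf.expectation Mk (\<lambda>ms. \<Sum>r<k. sel f x r ms * \<phi> (ms, flip x (ms!r)))"
  proof (rule pmf_int_mono[OF finMk])
    fix ms assume ms: "ms \<in> set_pmf Mk"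
    have "SZ ms - SO ms = (\<Sum>r<k. sel f x r ms * (Zi (ms!r) - Oc (ms!r)))"
      by (simp add: SZ_def SO_def sum_subtractf algebra_simps)
    also have "\<dots> \<le> (\<Sum>r<k. sel f x r ms * \<phi> (ms, flip x (ms!r)))"
    proof (rule sum_mono, rule mult_left_mono)
      fix r assume "r \<in> {..<k}"
      then have "length (ms!r) = n" using supp[OF ms] nth_mem by auto
      then show "Zi (ms!r) - Oc (ms!r) \<le> \<phi> (ms, flip x (ms!r))" by (rule pw)
    qed (rule sel_nonneg)
    finally show "SZ ms - SO ms \<le> (\<Sum>r<k. sel f x r ms * \<phi> (ms, flip x (ms!r)))" .
  qed
  also have "\<dots> = measure_pmf.expectation STEP \<phi>" by (rule E_step[OF k1, symmetric])
  finally show ?thesis .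
qed

lemma prob_step_B:
  "measure_pmf.prob STEP (event_B n x \<times> UNIV) = 1 - (1 - (1 - (1-p) ^ card Jz)) ^ k"
proof -
  have "map_pmf fst STEP = Mk"
    by (simp add: map_bind_pmf map_pmf_comp map_pmf_const bind_return_pmf')
  then have "measure_pmf.prob STEP (event_B n x \<times> UNIV) = measure_pmf.prob Mk (event_B n x)"
    by (metis measure_map_pmf vimage_fst)
  also have "\<dots> = measure_pmf.expectation Mk (indicator (event_B n x))"
    by simp
  also have "\<dots> = measure_pmf.expectation Mk (\<lambda>ms. if \<exists>i<k. zfl x n (ms!i) then 1 else 0::real)"
  proof (rule pmf_int_cong)
    fix ms assume "ms \<in> set_pmf Mk"
    then have "length ms = k" using supp by blast
    have "(ms \<in> event_B n x) = (\<exists>i<k. zfl x n (ms!i))"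
    proof
      assume "ms \<in> event_B n x"
      then obtain m i where mi: "m \<in> set ms" "i < n" "\<not> x!i" "m!i" by (auto simp: event_B_def)
      then obtain j where j: "j < length ms" "ms!j = m" by (auto simp: in_set_conv_nth)
      show "\<exists>j<k. zfl x n (ms!j)" using mi j \<open>length ms = k\<close> unfolding zfl_def by auto
    next
      assume "\<exists>j<k. zfl x n (ms!j)"
      then obtain j i where ji: "j < k" "i < n" "\<not> x!i" "ms!j!i" by (auto simp: zfl_def)
      then have "ms!j \<in> set ms" using \<open>length ms = k\<close> by simp
      then show "ms \<in> event_B n x" using ji unfolding event_B_def by auto
    qed
    then show "indicator (event_B n x) ms = (if \<exists>i<k. zfl x n (ms!i) then 1 else 0::real)"
      by (simp add: indicator_def)
  qed
  also have "\<dots> = 1 - (1 - (1 - (1-p) ^ card Jz)) ^ k"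
    using E_exists[of "zfl x n"] E_zfl by simp
  finally show ?thesis .
qed


lemma Oc_card: "Oc m = real (card {j. j < n \<and> x!j \<and> m!j})"
proof -
  have "Oc m = (\<Sum>j\<in>{j. j < n \<and> x!j \<and> m!j}. 1::real)"
    unfolding Oc_def J_def by (rule sum.mono_neutral_cong_right) auto
  then show ?thesis by simp
qed

lemma zeros_diff:
  assumes lm: "length m = n"
  shows "real (zeros x) - real (zeros (flip x m))
      = real (card {i. i < n \<and> \<not> x!i \<and> m!i}) - Oc m"
proof -
  let ?Z1 = "{i. i < n \<and> \<not> x!i \<and> \<not> m!i}"
  let ?A = "{i. i < n \<and> \<not> x!i \<and> m!i}"
  let ?O = "{i. i < n \<and> x!i \<and> m!i}"
  have "zeros x = card {i. i < n \<and> \<not> x!i}"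
    using len by (simp add: zeros_def length_filter_conv_card)
  also have "{i. i < n \<and> \<not> x!i} = ?Z1 \<union> ?A" by auto
  also have "card (?Z1 \<union> ?A) = card ?Z1 + card ?A" by (rule card_Un_disjoint) auto
  finally have zx: "zeros x = card ?Z1 + card ?A" .
  have "zeros (flip x m) = card {i. i < n \<and> \<not> flip x m ! i}"
    using flip_n[OF lm] by (simp add: zeros_def length_filter_conv_card)
  also have "{i. i < n \<and> \<not> flip x m ! i} = ?Z1 \<union> ?O"
    using len lm by (auto simp: flip_nth)
  also have "card (?Z1 \<union> ?O) = card ?Z1 + card ?O" by (rule card_Un_disjoint) auto
  finally have zy: "zeros (flip x m) = card ?Z1 + card ?O" .
  show ?thesis using zx zy by (simp add: Oc_card)
qed

lemma Oc_nonneg: "0 \<le> Oc m" by (simp add: Oc_card)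

lemma pw_diff:
  assumes lm: "length m = n"
  shows "Zi m - Oc m \<le> real (zeros x) - real (zeros (flip x m))"
    and "Zi m - Oc m \<le> min 1 (real (zeros x) - real (zeros (flip x m)))"
proof -
  let ?A = "{i. i < n \<and> \<not> x!i \<and> m!i}"
  have d: "real (zeros x) - real (zeros (flip x m)) = real (card ?A) - Oc m" by (rule zeros_diff[OF lm])
  have o: "0 \<le> Oc m" by (rule Oc_nonneg)
  have "Zi m - Oc m \<le> real (card ?A) - Oc m \<and> Zi m - Oc m \<le> min 1 (real (card ?A) - Oc m)"
  proof (cases "zfl x n m")
    case True
    then have "?A \<noteq> {}" by (auto simp: zfl_def)
    then have "card ?A \<ge> 1" by (metis (no_types, lifting) One_nat_def Suc_leI card_gt_0_iff finite_nat_set_iff_bounded mem_Collect_eq)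
    then show ?thesis using True o by (simp add: Zi_def)
  next
    case False
    then have "?A = {}" by (auto simp: zfl_def)
    then show ?thesis using False o by (simp add: Zi_def)
  qed
  then show "Zi m - Oc m \<le> real (zeros x) - real (zeros (flip x m))"
    and "Zi m - Oc m \<le> min 1 (real (zeros x) - real (zeros (flip x m)))" using d by simp_all
qed


lemma main_S2:
  fixes \<phi> :: "bool list list \<times> bool list \<Rightarrow> real"
  assumes k1: "k \<ge> 1" and pJ: "p * card J \<le> 1"
    and pw: "\<And>ms m. length m = n \<Longrightarrow> Zi m - Oc m \<le> \<phi> (ms, flip x m)"
  shows "(1-p) ^ card J * measure_pmf.prob STEP (event_B n x \<times> UNIV) * (1 - p * card J)
      - p * card J * (k * (1 - (1-p)^n) ^ (k - 1)) \<le> measure_pmf.expectation STEP \<phi>"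
proof -
  let ?th = "(1-p) ^ card J" and ?u = "1 - (1-p) ^ card Jz"
  let ?ESZ = "measure_pmf.expectation Mk SZ"
  have th: "0 \<le> ?th" "?th \<le> 1" using p0 p1 by (simp_all add: power_le_one)
  have u: "0 \<le> ?u" "?u \<le> 1" using p0 p1 by (simp_all add: power_le_one)
  have PB: "measure_pmf.prob STEP (event_B n x \<times> UNIV) = 1 - (1 - ?u) ^ k"
    using prob_step_B by simp
  have "?th * (1 - (1 - ?u) ^ k) \<le> 1 - (1 - ?th * ?u) ^ k"
    using concav[OF th u] .
  also have "\<dots> \<le> ?ESZ" using E_SZ by simp
  finally have sz: "?th * measure_pmf.prob STEP (event_B n x \<times> UNIV) \<le> ?ESZ" using PB by simp
  have f0: "0 \<le> 1 - p * card J" using pJ by simp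
  have "?th * measure_pmf.prob STEP (event_B n x \<times> UNIV) * (1 - p * card J)
      - p * card J * (k * (1 - (1-p)^n) ^ (k - 1))
      \<le> ?ESZ * (1 - p * card J) - p * card J * (k * (1 - (1-p)^n) ^ (k - 1))"
    using mult_right_mono[OF sz f0] by simp
  also have "\<dots> = ?ESZ - p * card J * (?ESZ + k * (1 - (1-p)^n) ^ (k - 1))"
    by (simp add: algebra_simps)
  also have "\<dots> \<le> ?ESZ - measure_pmf.expectation Mk SO" using E_SO by simp
  also have "\<dots> \<le> measure_pmf.expectation STEP \<phi>" by (rule step_bound[OF k1 pw])
  finally show ?thesis .
qed

end


lemma pow_lb:
  fixes p :: real
  assumes "0 \<le> p" "p \<le> 1/2" "real m * p \<le> 1"
  shows "exp (-2) \<le> (1 - p) ^ m"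
proof -
  have pos: "0 < 1 - p" using assms by simp
  have "- p - 2 * p\<^sup>2 \<le> ln (1 - p)" by (rule ln_one_minus_pos_lower_bound) (use assms in auto)
  moreover have "2 * p\<^sup>2 \<le> p"
  proof -
    have "p * p \<le> (1/2) * p" using assms by (intro mult_right_mono) auto
    then show ?thesis by (simp add: power2_eq_square)
  qed
  ultimately have l: "-2 * p \<le> ln (1 - p)" by simp
  have "-2 \<le> real m * (-2 * p)" using assms by simp
  also have "\<dots> \<le> real m * ln (1 - p)" using mult_left_mono[OF l, of "real m"] by simp
  also have "\<dots> = ln ((1 - p) ^ m)" using pos by (simp add: ln_realpow)
  finally have "exp (-2) \<le> exp (ln ((1 - p) ^ m))" by simp
  then show ?thesis using pos by simp
qed

lemma tail:
  fixes lam :: real and k :: nat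
  assumes k1: "k \<ge> 1" and kl: "real k \<ge> lam - 1/2"
  shows "real k * (1 - exp (-2)) ^ (k - 1) \<le> 2 * exp 4 * exp (- (exp (-2) / 2) * lam)"
proof -
  define d :: real where "d = exp (-2)"
  have d0: "0 < d" "d \<le> 1" by (simp_all add: d_def)
  have "1 - d \<le> exp (-d)" using exp_ge_add_one_self[of "-d"] by simp
  then have "(1 - d) ^ (k - 1) \<le> exp (-d) ^ (k - 1)" using d0 by (intro power_mono) auto
  also have "\<dots> = exp (- d * (real k - 1))"
    using k1 by (simp add: exp_of_nat_mult[symmetric] of_nat_diff algebra_simps)
  finally have a: "(1 - d) ^ (k - 1) \<le> exp (- d * (real k - 1))" .
  have "d * real k / 2 \<le> exp (d * real k / 2)" using exp_ge_add_one_self[of "d * real k / 2"] by linarith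
  then have h: "d * real k \<le> exp (d * real k / 2) * 2"
    using mult_right_mono[of "d * real k / 2" "exp (d * real k / 2)" 2] by simp
  have "real k = (d * real k) / d" using d0 by simp
  also have "\<dots> \<le> (exp (d * real k / 2) * 2) / d" by (rule divide_right_mono[OF h]) (use d0 in simp)
  finally have b: "real k \<le> (2 / d) * exp (d * real k / 2)" by (simp add: mult.commute)
  have "real k * (1 - d) ^ (k - 1) \<le> (2 / d) * exp (d * real k / 2) * exp (- d * (real k - 1))"
    using mult_mono[OF b a] d0 by simp
  also have "\<dots> = (2 / d) * exp (d - d * real k / 2)"
    by (simp add: mult.assoc exp_add[symmetric] algebra_simps)
  also have "\<dots> \<le> (2 / d) * exp (2 - (d / 2) * lam)"
  proof -
    have "d - d * real k / 2 \<le> 2 - (d / 2) * lam"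
    proof -
      have "d * (lam - 1/2) \<le> d * real k" using kl d0 by (intro mult_left_mono) auto
      then show ?thesis using d0 by (simp add: algebra_simps)
    qed
    then have "exp (d - d * real k / 2) \<le> exp (2 - (d / 2) * lam)" by simp
    then show ?thesis using d0 by (intro mult_left_mono) auto
  qed
  also have "\<dots> = 2 * exp 4 * exp (- (d / 2) * lam)"
  proof -
    have "2 / d = 2 * exp 2" by (simp add: d_def exp_minus field_simps)
    moreover have "exp (2 - (d / 2) * lam) = exp 2 * exp (- (d / 2) * lam)" by (simp add: exp_add[symmetric])
    moreover have "exp (2::real) * exp 2 = exp 4" by (simp add: exp_add[symmetric])
    ultimately show ?thesis by (simp add: algebra_simps)
  qed
  finally show ?thesis by (simp add: d_def)
qed

lemma final_bound:
  fixes c :: real and n :: nat and x :: "bool list" and lam :: real and f :: "bool list \<Rightarrow> real"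
  assumes "0 < c" "c \<le> 1"
  and len: "length x = n" and z0: "zeros x > 0" and lam1: "lam \<ge> 1" and mono: "monotone_pb n f"
  shows "let P = ea_step c n x lam f;
            bound = measure_pmf.prob P (event_B n x \<times> UNIV)
                      * exp (-2) * (1 - c * (1 - real (zeros x) / real n))
                    - 2 * exp 4 * exp (- (exp (-2) / 2) * lam)
        in measure_pmf.expectation P (\<lambda>(ms, x'). real (zeros x) - real (zeros x')) \<ge> bound
         \<and> measure_pmf.expectation P (\<lambda>(ms, x'). min 1 (real (zeros x) - real (zeros x'))) \<ge> bound"
proof -
  define p where "p = c / real n"
  define k where "k = nat (round lam)"
  have zn: "zeros x \<le> n" using len length_filter_le[of Not x] by (simp add: zeros_def)
  have n1: "n \<ge> 1" using z0 zn by simp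
  have p0: "0 \<le> p" and p1: "p \<le> 1" using assms n1 by (simp_all add: p_def field_simps)
  interpret S2 x n f p k by unfold_locales (use len mono p0 p1 in auto)
  have rl: "\<bar>real_of_int (round lam) - lam\<bar> \<le> 1/2" by (rule of_int_round_abs_le)
  have rl1: "round lam \<ge> 1" using rl lam1 by linarith
  have kr: "real k = real_of_int (round lam)" using rl1 by (simp add: k_def)
  have k1: "k \<ge> 1" using rl1 by (simp add: k_def)
  have kl: "real k \<ge> lam - 1/2" using rl kr by linarith
  have eq: "ea_step c n x lam f = STEP" by (simp add: ea_step_def p_def k_def)
  have cJ: "card J = n - zeros x" using cardJ cardJz by simp
  have pJ: "p * card J = c * (1 - real (zeros x) / real n)"
    using cJ zn n1 by (simp add: p_def of_nat_diff field_simps)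
  have pJ1: "p * card J \<le> 1"
  proof -
    have "0 \<le> 1 - real (zeros x) / real n" using zn n1 by (simp add: field_simps)
    moreover have "1 - real (zeros x) / real n \<le> 1" using n1 by simp
    ultimately have "c * (1 - real (zeros x) / real n) \<le> 1 * 1" using assms by (intro mult_mono) auto
    then show ?thesis using pJ by simp
  qed
  define PB where "PB = measure_pmf.prob STEP (event_B n x \<times> UNIV)"
  define err where "err = p * card J * (real k * (1 - (1-p)^n) ^ (k - 1))"
  have PB0: "0 \<le> PB" by (simp add: PB_def)
  have fac0: "0 \<le> 1 - p * card J" using pJ1 by simp
  have th: "exp (-2) \<le> (1-p) ^ card J"
  proof (cases "card J = 0")
    case True then show ?thesis by simp
  next
    case False
    then have n2: "n \<ge> 2" using cJ z0 by linarith
    have "p \<le> 1/2" using assms n2 by (simp add: p_def field_simps)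
    moreover have "real (card J) * p \<le> 1" using pJ1 by (simp add: mult.commute)
    ultimately show ?thesis using p0 by (intro pow_lb) auto
  qed
  have errb: "err \<le> 2 * exp 4 * exp (- (exp (-2) / 2) * lam)"
  proof (cases "card J = 0")
    case True
    then have "err = 0" by (simp add: err_def)
    then show ?thesis by simp
  next
    case False
    then have n2: "n \<ge> 2" using cJ z0 by linarith
    have "p \<le> 1/2" using assms n2 by (simp add: p_def field_simps)
    moreover have "real n * p \<le> 1" using assms n1 by (simp add: p_def)
    ultimately have q: "exp (-2) \<le> (1-p) ^ n" using p0 by (intro pow_lb) auto
    have q1: "(1-p) ^ n \<le> 1" using p0 p1 by (simp add: power_le_one)
    have "(1 - (1-p)^n) ^ (k - 1) \<le> (1 - exp (-2)) ^ (k - 1)"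
      using q q1 by (intro power_mono) auto
    then have "real k * (1 - (1-p)^n) ^ (k - 1) \<le> real k * (1 - exp (-2)) ^ (k - 1)"
      by (simp add: mult_left_mono)
    moreover have "0 \<le> real k * (1 - (1-p)^n) ^ (k - 1)" using q1 by simp
    ultimately have "err \<le> 1 * (real k * (1 - exp (-2)) ^ (k - 1))"
      unfolding err_def by (intro mult_mono[OF pJ1]) auto
    also have "\<dots> \<le> 2 * exp 4 * exp (- (exp (-2) / 2) * lam)" using tail[OF k1 kl] by simp
    finally show ?thesis .
  qed
  have key: "PB * exp (-2) * (1 - c * (1 - real (zeros x) / real n)) - 2 * exp 4 * exp (- (exp (-2) / 2) * lam)
      \<le> (1-p) ^ card J * PB * (1 - p * card J) - err"
  proof -
    have "PB * exp (-2) * (1 - p * card J) \<le> (1-p) ^ card J * PB * (1 - p * card J)"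
      using mult_right_mono[OF mult_left_mono[OF th PB0] fac0] by (simp add: mult.commute)
    then show ?thesis using errb pJ by simp
  qed
  let ?bound = "measure_pmf.prob (ea_step c n x lam f) (event_B n x \<times> UNIV) * exp (-2)
      * (1 - c * (1 - real (zeros x) / real n)) - 2 * exp 4 * exp (- (exp (-2) / 2) * lam)"
  have b1: "?bound \<le> measure_pmf.expectation (ea_step c n x lam f) (\<lambda>(ms, x'). real (zeros x) - real (zeros x'))"
  proof -
    have "(1-p) ^ card J * PB * (1 - p * card J) - err
        \<le> measure_pmf.expectation STEP (\<lambda>(ms, x'). real (zeros x) - real (zeros x'))"
      unfolding PB_def err_def by (rule main_S2[OF k1 pJ1]) (simp add: pw_diff(1))
    then show ?thesis using key by (simp add: eq PB_def)
  qed
  have b2: "?bound \<le> measure_pmf.expectation (ea_step c n x lam f) (\<lambda>(ms, x'). min 1 (real (zeros x) - real (zeros x')))"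
  proof -
    have "(1-p) ^ card J * PB * (1 - p * card J) - err
        \<le> measure_pmf.expectation STEP (\<lambda>(ms, x'). min 1 (real (zeros x) - real (zeros x')))"
      unfolding PB_def err_def by (rule main_S2[OF k1 pJ1]) (simp only: case_prod_conv, erule pw_diff(2))
    then show ?thesis using key by (simp add: eq PB_def)
  qed
  show ?thesis
    using b1 b2 by (simp add: Let_def)
qed

theorem mainTheorem10:
  fixes c :: real
  assumes "0 < c" "c \<le> 1"
  shows "\<exists>a1 a2 b :: real. a1 > 0 \<and> a2 > 0 \<and> b > 0 \<and>
    (\<forall>(n::nat) (x::bool list) (lam::real) (f::bool list \<Rightarrow> real).
       length x = n \<longrightarrow> zeros x > 0 \<longrightarrow> lam \<ge> 1 \<longrightarrow> monotone_pb n f \<longrightarrow>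
       (let P = ea_step c n x lam f;
            bound = measure_pmf.prob P (event_B n x \<times> UNIV)
                      * a1 * (1 - c * (1 - real (zeros x) / real n))
                    - a2 * exp (- b * lam)
        in measure_pmf.expectation P (\<lambda>(ms, x'). real (zeros x) - real (zeros x')) \<ge> bound
         \<and> measure_pmf.expectation P (\<lambda>(ms, x'). min 1 (real (zeros x) - real (zeros x'))) \<ge> bound))"
  apply (rule exI[of _ "exp (-2)"], rule exI[of _ "2 * exp 4"], rule exI[of _ "exp (-2) / 2"])
  using final_bound[OF assms] by simp

end
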